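(* For all real numbers $t\ge1$, $s\ge e$, $c\in(0,1]$ and $0<\omega\le\delta\le e^{-e}$, $$\frac1t\ln\Big(\frac{\ln(2t)}{\omega}\Big)\ge\frac cs\ln\Big(\frac{\ln s}{\delta}\Big)\ \Longrightarrow\ t\le\frac sc\cdot\frac{\ln(2/\omega)+\ln\ln(1/(c\omega))}{\ln(1/\delta)}.$$ *)

theory Defs
  imports Complex_Main
begin

end

theory Submission
  imports Defs
begin

lemma ln_lt_half: "(y::real) > 0 \<Longrightarrow> ln y < y / 2"
proof -
  assume y: "y > 0"
  have "ln (y/2) \<le> y/2 - 1" using ln_le_minus_one[of "y/2"] y by simp
  hence "ln y - ln 2 \<le> y/2 - 1" using y by (simp add: ln_div)
  thus ?thesis using ln_2_less_1 by linarith
qed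

theorem lemma6:
  fixes t s c \<omega> \<delta> :: real
  assumes "t \<ge> 1" and "s \<ge> exp 1" and "0 < c" and "c \<le> 1"
    and "0 < \<omega>" and "\<omega> \<le> \<delta>" and "\<delta> \<le> exp (- exp 1)"
    and "(1 / t) * ln (ln (2 * t) / \<omega>) \<ge> (c / s) * ln (ln s / \<delta>)"
  shows "t \<le> (s / c) * ((ln (2 / \<omega>) + ln (ln (1 / (c * \<omega>)))) / ln (1 / \<delta>))"
proof -
  note A = assms
  define u where "u = ln (1/\<omega>)"
  define L where "L = ln (1/\<delta>)"
  define a where "a = ln s"
  define b where "b = ln (1/c)"
  define y where "y = ln (2*t)"
  have dpos: "\<delta> > 0" using A by linarith
  have spos: "s > 0" using A(2) exp_gt_zero[of 1] by linarith
  have e2: "exp 1 \<ge> (2::real)" using exp_ge_add_one_self[of 1] by simp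
  have L: "L \<ge> exp 1"
  proof -
    have "ln \<delta> \<le> - exp 1" using A(7) dpos by (metis ln_exp ln_le_cancel_iff exp_gt_zero)
    thus ?thesis unfolding L_def using dpos by (simp add: ln_div)
  qed
  have uL: "u \<ge> L" unfolding u_def L_def using A dpos by (simp add: ln_div)
  have a1: "a \<ge> 1" unfolding a_def using A(2) spos
    by (metis exp_gt_zero ln_exp ln_le_cancel_iff)
  have b0: "b \<ge> 0" unfolding b_def using A(3,4) by (simp add: ln_div)
  have ypos: "y > 0" unfolding y_def using A(1) by simp
  have lnyu: "ln (ln (2*t) / \<omega>) = ln y + u" unfolding y_def u_def
    using ypos A(5) y_def by (simp add: ln_div)
  have lnas: "ln (ln s / \<delta>) = ln a + L" unfolding a_def L_def
    using a1 a_def dpos by (simp add: ln_div)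
  have ln2w: "ln (2/\<omega>) = ln 2 + u" unfolding u_def using A(5) by (simp add: ln_div)
  have lnlncw: "ln (ln (1/(c*\<omega>))) = ln (u+b)" unfolding u_def b_def
    using A(3,5) by (simp add: ln_div ln_mult algebra_simps)
  have lna0: "ln a \<ge> 0" using a1 by simp
  define N where "N = ln y + u"
  define D where "D = ln a + L"
  have Dpos: "D > 0" unfolding D_def using lna0 L e2 by linarith
  have DL: "D \<ge> L" unfolding D_def using lna0 by simp
  have Lpos: "L > 0" using L e2 by linarith
  have H: "(1/t) * N \<ge> (c/s) * D" using A(8) lnyu lnas N_def D_def by simp
  have Npos: "N > 0"
  proof -
    have "(c/s) * D > 0" using Dpos A(3) spos by simp
    hence "(1/t)*N > 0" using H by linarith
    thus ?thesis using A(1) by (simp add: zero_less_divide_iff)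
  qed
  have tb: "t \<le> (s/c) * N / D"
  proof -
    have "c * D * t \<le> s * N" using H A(1) A(3) spos
      by (simp add: field_simps)
    thus ?thesis using Dpos A(3) by (simp add: field_simps)
  qed
  have tb2: "t \<le> (s/c) * N / L"
  proof -
    have "(s/c) * N / D \<le> (s/c) * N / L"
      using DL Lpos Npos spos A(3) by (intro divide_left_mono) auto
    thus ?thesis using tb by linarith
  qed
  have yb: "y \<le> a + b + ln (2 * N / L)"
  proof -
    have "y \<le> ln (2 * ((s/c) * N / L))" unfolding y_def
      using tb2 A(1) by simp
    also have "\<dots> = ln s + ln (1/c) + ln (2 * N / L)"
      using spos A(3) Npos Lpos by (simp add: ln_mult ln_div)
    finally show ?thesis unfolding a_def b_def .
  qed
  have key: "y \<le> 2 * (u+b) * a"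
  proof (rule ccontr)
    assume "\<not> ?thesis"
    hence yg: "y > 2*(u+b)*a" by simp
    have ub: "u \<ge> 2" using uL L e2 by linarith
    have ua: "u*a \<ge> u" using mult_left_mono[OF a1, of u] ub by simp
    have ua2: "u*a \<ge> a" using mult_right_mono[of 1 u a] ub a1 by simp
    have ba: "b*a \<ge> b" using mult_left_mono[OF a1 b0] by simp
    have "a + b \<le> (u+b)*a" using ua2 ba by (simp add: algebra_simps)
    hence ab: "a + b \<le> y/2" using yg by linarith
    have dist: "(u+b)*a = u*a + b*a" by (simp add: algebra_simps)
    have uy: "u < y/2" using yg dist ua ba b0 by linarith
    have lny: "ln y < y/2" using ln_lt_half ypos .
    have "N \<le> y" unfolding N_def using lny uy by linarith
    hence "2*N/L \<le> y"
    proof -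
      have "2*N \<le> L*N" using Npos L e2 by simp
      hence "2*N/L \<le> N" using Lpos by (simp add: divide_le_eq mult.commute)
      thus ?thesis using `N \<le> y` by linarith
    qed
    hence "ln (2*N/L) \<le> ln y" using Npos Lpos by (intro ln_mono) auto
    thus False using yb ab lny by linarith
  qed
  have lnyb: "ln y \<le> ln 2 + ln (u+b) + ln a"
  proof -
    have "u + b > 0" using uL L e2 b0 by linarith
    hence "ln y \<le> ln (2*(u+b)*a)" using key ypos by simp
    also have "\<dots> = ln 2 + ln (u+b) + ln a" using `u+b>0` a1 ln_mult[of 2 "u+b"] ln_mult[of "2*(u+b)" a] by simp
    finally show ?thesis .
  qed
  define R where "R = ln 2 + u + ln (u+b)"
  have lnub: "ln (u+b) \<ge> 0" using uL L e2 b0 by simp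
  have RL: "R \<ge> L" unfolding R_def using uL lnub ln_ge_zero[of "2::real"] by linarith
  have NR: "N \<le> R + ln a" unfolding N_def R_def using lnyb by linarith
  have "N * L \<le> R * D"
  proof -
    have "N * L \<le> (R + ln a) * L" using NR Lpos by (simp add: mult_right_mono)
    also have "\<dots> \<le> R * L + R * ln a" using RL lna0 by (simp add: algebra_simps mult_right_mono)
    finally show ?thesis unfolding D_def by (simp add: algebra_simps)
  qed
  hence "N / D \<le> R / L" using Dpos Lpos by (simp add: field_simps)
  hence "(s/c) * N / D \<le> (s/c) * (R / L)" using spos A(3)
    by (metis mult_left_mono times_divide_eq_right less_eq_real_def divide_pos_pos)
  hence "t \<le> (s/c) * (R / L)" using tb by linarith
  thus ?thesis unfolding R_def L_def using ln2w lnlncw u_def by simp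
qed

end
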